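(* Let $0<\alpha<1$, $T>0$, $M\in\mathbb{N}^+$, $\Delta t=T/M$, $t_n=n\Delta t$, and let $u\in C^{k+1}[0,T]$, where $1\le i\le k\le 6$ are integers. Let $D^{\alpha}_{k,i}u(t_n)$ be the approximation of the Caputo derivative defined in the context. Then there is a constant $C$ (depending on $u$, $\alpha$, $k$, $i$, but not on $n$ or $\Delta t$) such that for all $k\le n\le M$: (i) if $1\le i<k\le 6$, $$\big|D_{k,i}^{\alpha}u(t_{n})-{}^{C}D^{\alpha}u(t_{n})\big|\le C\big(t_{n-k+i}^{-\alpha-1}\,\Delta t^{k+1}+\Delta t^{k+1-\alpha}\big);$$ (ii) if $i=k\in\{1,\dots,6\}$, $$\big|D_{k,k}^{\alpha}u(t_{n})-{}^{C}D^{\alpha}u(t_{n})\big|\le C\,\Delta t^{k+1-\alpha}.$$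
   Context: Caputo derivative of order $\alpha\in(0,1)$: ${}^{C}D^{\alpha}u(t)=\frac{1}{\Gamma(1-\alpha)}\int_0^t (t-\xi)^{-\alpha}u'(\xi)\,\mathrm{d}\xi$. Let $I_j=[t_{j-1},t_j]$. For integers $m\ge1$, $j$, $q$, let $p^{m}_{j,q}$ denote the polynomial of degree at most $m$ interpolating $u$ at the $m+1$ nodes $t_{j+q-m-1},t_{j+q-m},\dots,t_{j+q-1}$ (considered on $I_j$). For $1\le i\le k\le 6$ and $n\ge k$, let $P^{k}_{i,n}$ be the continuous piecewise polynomial on $[0,t_n]$ given on $I_j$ by: $P^{k}_{i,n}=p^{k-1}_{j,k-j}$ for $1\le j\le k-i$; $P^{k}_{i,n}=p^{k}_{j,i}$ for $k-i+1\le j\le n-i+1$; $P^{k}_{i,n}=p^{k}_{j,n+1-j}$ for $n-i+2\le j\le n$. Then $D^{\alpha}_{k,i}u(t_n)=\frac{1}{\Gamma(1-\alpha)}\int_0^{t_n}(t_n-\xi)^{-\alpha}\frac{\mathrm{d}}{\mathrm{d}\xi}P^{k}_{i,n}(\xi)\,\mathrm{d}\xi$. *)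

theory Defs
  imports "HOL-Analysis.Analysis"
begin

text \<open>u is in C^m[0,T]: derivatives (one-sided at endpoints, i.e. within S) up to order m
  exist on S, and all of D_0 = u, ..., D_m are continuous on S.\<close>
definition Ck_on :: "nat \<Rightarrow> real set \<Rightarrow> (real \<Rightarrow> real) \<Rightarrow> bool" where
  "Ck_on m S u \<longleftrightarrow> (\<exists>D :: nat \<Rightarrow> real \<Rightarrow> real. D 0 = u \<and>
      (\<forall>j<m. \<forall>x\<in>S. (D j has_real_derivative D (Suc j) x) (at x within S)) \<and>
      (\<forall>j\<le>m. continuous_on S (D j)))"

definition caputo :: "real \<Rightarrow> (real \<Rightarrow> real) \<Rightarrow> real \<Rightarrow> real" where
  "caputo \<alpha> u t = (1 / Gamma (1 - \<alpha>)) *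
      integral {0..t} (\<lambda>\<xi>. (t - \<xi>) powr (- \<alpha>) * deriv u \<xi>)"

text \<open>Lagrange interpolation polynomial of degree at most m of u at the m+1 nodes
  t_a, t_(a+1), ..., t_(a+m), where t_l = l * dt.\<close>
definition interp :: "real \<Rightarrow> (real \<Rightarrow> real) \<Rightarrow> int \<Rightarrow> nat \<Rightarrow> real \<Rightarrow> real" where
  "interp dt u a m \<xi> = (\<Sum>l\<in>{0..m}. u (real_of_int (a + int l) * dt) *
      (\<Prod>r\<in>{0..m} - {l}. (\<xi> - real_of_int (a + int r) * dt) /
         (real_of_int (a + int l) * dt - real_of_int (a + int r) * dt)))"

text \<open>p^m_{j,q}: interpolant at nodes t_(j+q-m-1), ..., t_(j+q-1).\<close>
definition pjq :: "real \<Rightarrow> (real \<Rightarrow> real) \<Rightarrow> nat \<Rightarrow> int \<Rightarrow> int \<Rightarrow> real \<Rightarrow> real" where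
  "pjq dt u m j q = interp dt u (j + q - int m - 1) m"

text \<open>Index j of the interval I_j = [t_(j-1), t_j] containing xi (j >= 1).\<close>
definition interval_index :: "real \<Rightarrow> real \<Rightarrow> int" where
  "interval_index dt \<xi> = max 1 \<lceil>\<xi> / dt\<rceil>"

definition Ppw :: "real \<Rightarrow> (real \<Rightarrow> real) \<Rightarrow> nat \<Rightarrow> nat \<Rightarrow> nat \<Rightarrow> real \<Rightarrow> real" where
  "Ppw dt u k i n \<xi> =
     (let j = interval_index dt \<xi> in
      if j \<le> int k - int i then pjq dt u (k - 1) j (int k - j) \<xi>
      else if j \<le> int n - int i + 1 then pjq dt u k j (int i) \<xi>
      else pjq dt u k j (int n + 1 - j) \<xi>)"

definition Dapprox :: "real \<Rightarrow> real \<Rightarrow> (real \<Rightarrow> real) \<Rightarrow> nat \<Rightarrow> nat \<Rightarrow> nat \<Rightarrow> real" where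
  "Dapprox \<alpha> dt u k i n = (1 / Gamma (1 - \<alpha>)) *
      integral {0..real n * dt}
        (\<lambda>\<xi>. (real n * dt - \<xi>) powr (- \<alpha>) * deriv (Ppw dt u k i n) \<xi>)"

end

theory Submission
  imports Defs "HOL-Computational_Algebra.Polynomial"
begin


lemma rolle_within:
  fixes f f' :: "real \<Rightarrow> real"
  assumes "c < d" "{c..d} \<subseteq> {a..b}" "f c = 0" "f d = 0"
    "\<forall>x\<in>{a..b}. (f has_real_derivative f' x) (at x within {a..b})"
  shows "\<exists>z. c<z \<and> z<d \<and> f' z = 0"
proof -
  have "continuous_on {a..b} f"
    using assms(5) by (meson DERIV_continuous continuous_on_eq_continuous_within)
  then have cont: "continuous_on {c..d} f" using assms(2) continuous_on_subset by blast
  have der: "(f has_real_derivative f' x) (at x)" if "c < x" "x < d" for x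
  proof -
    have "a < x" "x < b" using that assms(1,2) by auto
    then show ?thesis using assms(5) that at_within_Icc_at[of a x b] \<open>a < x\<close> \<open>x < b\<close>
      by (metis atLeastAtMost_iff less_eq_real_def)
  qed
  obtain z where z: "c < z" "z < d" "DERIV f z :> 0"
    using Rolle[of c d f] assms cont der real_differentiable_def by metis
  then show ?thesis using der[OF z(1,2)] DERIV_unique by blast
qed

lemma gen_rolle:
  fixes D :: "nat \<Rightarrow> real \<Rightarrow> real"
  assumes "finite Z" "card Z = Suc m" "Z \<subseteq> {a..b}" "\<forall>z\<in>Z. D 0 z = 0"
    "\<forall>j<m. \<forall>x\<in>{a..b}. (D j has_real_derivative D (Suc j) x) (at x within {a..b})"
  shows "\<exists>\<eta>\<in>{a..b}. D m \<eta> = 0"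
  using assms
proof (induction m arbitrary: D Z)
  case 0
  then obtain z where "z \<in> Z" by (metis card.empty ex_in_conv nat.distinct(1))
  then show ?case using 0 by auto
next
  case (Suc m)
  define zs where "zs = sorted_list_of_set Z"
  have len: "length zs = Suc (Suc m)" using Suc.prems by (simp add: zs_def)
  have ss: "sorted_wrt (<) zs" unfolding zs_def by (rule strict_sorted_list_of_set)
  have setzs: "set zs = Z" using Suc.prems(1) by (simp add: zs_def)
  have inZ: "zs ! l \<in> Z" if "l < Suc (Suc m)" for l using that len setzs nth_mem by metis
  have lt: "zs ! l < zs ! l'" if "l < l'" "l' < Suc (Suc m)" for l l'
    using sorted_wrt_nth_less[OF ss that(1)] that len by simp
  have "\<forall>l<Suc m. \<exists>w. zs ! l < w \<and> w < zs ! Suc l \<and> D 1 w = 0"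
  proof (intro allI impI)
    fix l assume l: "l < Suc m"
    show "\<exists>w. zs ! l < w \<and> w < zs ! Suc l \<and> D 1 w = 0"
    proof -
      have 1: "zs ! l < zs ! Suc l" using lt l by simp
      have "zs ! l \<in> Z" "zs ! Suc l \<in> Z" using inZ l by simp_all
      then have "zs ! l \<in> {a..b}" "zs ! Suc l \<in> {a..b}" using Suc.prems(3) by blast+
      then have 2: "{zs ! l..zs ! Suc l} \<subseteq> {a..b}" by auto
      have 3: "D 0 (zs ! l) = 0" "D 0 (zs ! Suc l) = 0" using inZ l Suc.prems(4) by auto
      have 4: "\<forall>x\<in>{a..b}. (D 0 has_real_derivative D 1 x) (at x within {a..b})"
        using Suc.prems(5) by simp
      show ?thesis using rolle_within[OF 1 2 3 4] by blast
    qed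
  qed
  then obtain w where w: "\<And>l. l < Suc m \<Longrightarrow> zs ! l < w l \<and> w l < zs ! Suc l \<and> D 1 (w l) = 0"
    by metis
  have wmono: "w l < w l'" if "l < l'" "l' < Suc m" for l l'
  proof -
    have "w l < zs ! Suc l" using w that by auto
    also have "zs ! Suc l \<le> zs ! l'"
      using that lt[of "Suc l" l'] by (cases "Suc l = l'") auto
    also have "\<dots> < w l'" using w that by auto
    finally show ?thesis .
  qed
  have inj: "inj_on w {..<Suc m}"
    by (intro inj_onI) (metis lessThan_iff linorder_neqE_nat order_less_irrefl wmono)
  define W where "W = w ` {..<Suc m}"
  have cW: "card W = Suc m" using inj by (simp add: W_def card_image)
  have sW: "W \<subseteq> {a..b}"
  proof
    fix x assume "x \<in> W"
    then obtain l where l: "l < Suc m" "x = w l" by (auto simp: W_def)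
    have "zs ! l \<in> Z" "zs ! Suc l \<in> Z" using inZ l by simp_all
    then have "zs ! l \<in> {a..b}" "zs ! Suc l \<in> {a..b}" using Suc.prems(3) by blast+
    then show "x \<in> {a..b}" using w[OF l(1)] l by auto
  qed
  have "\<exists>\<eta>\<in>{a..b}. (\<lambda>j. D (Suc j)) m \<eta> = 0"
  proof (rule Suc.IH)
    show "finite W" by (simp add: W_def)
    show "card W = Suc m" by (rule cW)
    show "W \<subseteq> {a..b}" by (rule sW)
    show "\<forall>z\<in>W. D (Suc 0) z = 0" using w by (auto simp: W_def)
    show "\<forall>j<m. \<forall>x\<in>{a..b}. (D (Suc j) has_real_derivative D (Suc (Suc j)) x) (at x within {a..b})"
      using Suc.prems(5) by auto
  qed
  then show ?case by simp
qed

lemma pderiv_funpow_zero: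
  fixes p :: "real poly"
  shows "degree p \<le> j \<Longrightarrow> (pderiv ^^ Suc j) p = 0"
proof (induction j arbitrary: p)
  case 0
  then have "p = [:coeff p 0:]" by (metis degree_0_id le_zero_eq)
  then have "pderiv p = pderiv [:coeff p 0:]" by simp
  then have "pderiv p = 0" by (simp add: pderiv_pCons)
  then show ?case by simp
next
  case (Suc j)
  have "degree (pderiv p) \<le> j" using Suc.prems by (simp add: degree_pderiv)
  then have "(pderiv ^^ Suc j) (pderiv p) = 0" by (rule Suc.IH)
  then show ?case by (simp only: funpow_Suc_right o_def)
qed

lemma pderiv_funpow_deg:
  fixes p :: "real poly"
  shows "degree p = n \<Longrightarrow> (pderiv ^^ n) p = [: fact n * lead_coeff p :]"
proof (induction n arbitrary: p)
  case 0
  then show ?case by (metis degree_0_id fact_0 funpow_0 mult_1)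
next
  case (Suc n)
  have d: "degree (pderiv p) = n" using Suc.prems by (simp add: degree_pderiv)
  have lc: "lead_coeff (pderiv p) = of_nat (Suc n) * lead_coeff p"
    using d Suc.prems by (simp add: coeff_pderiv)
  have "(pderiv ^^ Suc n) p = (pderiv ^^ n) (pderiv p)" by (simp only: funpow_Suc_right o_def)
  also have "\<dots> = [: fact n * lead_coeff (pderiv p) :]" using Suc.IH[OF d] .
  also have "\<dots> = [: fact (Suc n) * lead_coeff p :]" using lc by (simp add: algebra_simps)
  finally show ?case .
qed

lemma deriv_funpow_poly:
  "((\<lambda>x. poly ((pderiv ^^ j) p) x) has_real_derivative poly ((pderiv ^^ Suc j) p) y) (at y within S)"
  by (rule has_field_derivative_at_within) simp

lemma interp_error:
  fixes Df :: "nat \<Rightarrow> real \<Rightarrow> real" and q :: "real poly"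
  assumes der: "\<forall>j<Suc m. \<forall>x\<in>{a..b}. (Df j has_real_derivative Df (Suc j) x) (at x within {a..b})"
    and dq: "degree q \<le> m" and fX: "finite X" and cX: "card X = Suc m" and sX: "X \<subseteq> {a..b}"
    and agree: "\<forall>x\<in>X. Df 0 x = poly q x"
    and B: "\<forall>y\<in>{a..b}. \<bar>Df (Suc m) y\<bar> \<le> B" and xi: "\<xi> \<in> {a..b}"
  shows "\<bar>Df 0 \<xi> - poly q \<xi>\<bar> \<le> B / fact (Suc m) * (\<Prod>x\<in>X. \<bar>\<xi> - x\<bar>)"
proof (cases "\<xi> \<in> X")
  case True
  have "0 \<le> B" using B xi by (meson abs_ge_zero order_trans)
  then show ?thesis using True agree by (simp add: prod_nonneg)
next
  case False
  define \<omega> where "\<omega> = (\<Prod>x\<in>X. [:-x, 1:])"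
  have pw: "poly \<omega> y = (\<Prod>x\<in>X. y - x)" for y by (simp add: \<omega>_def poly_prod)
  have pw0: "poly \<omega> \<xi> \<noteq> 0" using False fX by (simp add: pw)
  have dw: "degree \<omega> = Suc m" unfolding \<omega>_def
    by (subst degree_prod_sum_eq) (auto simp: cX)
  have lw: "lead_coeff \<omega> = 1" unfolding \<omega>_def by (simp add: lead_coeff_prod)
  define c where "c = (Df 0 \<xi> - poly q \<xi>) / poly \<omega> \<xi>"
  define G where "G j y = Df j y - poly ((pderiv ^^ j) q) y - c * poly ((pderiv ^^ j) \<omega>) y" for j y
  have "\<exists>\<eta>\<in>{a..b}. G (Suc m) \<eta> = 0"
  proof (rule gen_rolle[of "insert \<xi> X"])
    show "finite (insert \<xi> X)" using fX by simp
    show "card (insert \<xi> X) = Suc (Suc m)" using fX False cX by simp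
    show "insert \<xi> X \<subseteq> {a..b}" using xi sX by simp
    show "\<forall>z\<in>insert \<xi> X. G 0 z = 0"
      using agree pw0 fX by (auto simp: G_def c_def pw)
    show "\<forall>j<Suc m. \<forall>x\<in>{a..b}. (G j has_real_derivative G (Suc j) x) (at x within {a..b})"
    proof (intro allI impI ballI)
      fix j x assume j: "j < Suc m" and x: "x \<in> {a..b}"
      have "((\<lambda>y. Df j y - poly ((pderiv ^^ j) q) y - c * poly ((pderiv ^^ j) \<omega>) y) has_real_derivative
          Df (Suc j) x - poly ((pderiv ^^ Suc j) q) x - c * poly ((pderiv ^^ Suc j) \<omega>) x) (at x within {a..b})"
        using der j x by (intro DERIV_diff DERIV_cmult deriv_funpow_poly) auto
      then show "(G j has_real_derivative G (Suc j) x) (at x within {a..b})"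
        by (simp add: G_def[abs_def])
    qed
  qed
  then obtain \<eta> where eta: "\<eta> \<in> {a..b}" "G (Suc m) \<eta> = 0" by blast
  have "(pderiv ^^ Suc m) q = 0" using pderiv_funpow_zero dq by blast
  moreover have "(pderiv ^^ Suc m) \<omega> = [: fact (Suc m) :]" using pderiv_funpow_deg[OF dw] lw by simp
  ultimately have ceq: "Df (Suc m) \<eta> = c * fact (Suc m)" using eta(2) by (simp add: G_def)
  have "Df 0 \<xi> - poly q \<xi> = c * poly \<omega> \<xi>" using pw0 by (simp add: c_def)
  then have "\<bar>Df 0 \<xi> - poly q \<xi>\<bar> = \<bar>Df (Suc m) \<eta>\<bar> / fact (Suc m) * (\<Prod>x\<in>X. \<bar>\<xi> - x\<bar>)"
    by (simp add: ceq pw abs_mult abs_prod)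
  also have "\<dots> \<le> B / fact (Suc m) * (\<Prod>x\<in>X. \<bar>\<xi> - x\<bar>)"
    using B eta(1) by (intro mult_right_mono divide_right_mono) (auto simp: prod_nonneg)
  finally show ?thesis .
qed

definition ipoly :: "real \<Rightarrow> (real \<Rightarrow> real) \<Rightarrow> int \<Rightarrow> nat \<Rightarrow> real poly" where
  "ipoly dt u a m = (\<Sum>l\<in>{0..m}. smult (u (real_of_int (a + int l) * dt) /
      (\<Prod>r\<in>{0..m} - {l}. (real_of_int (a + int l) * dt - real_of_int (a + int r) * dt)))
      (\<Prod>r\<in>{0..m} - {l}. [: - (real_of_int (a + int r) * dt), 1 :]))"

lemma poly_ipoly: "poly (ipoly dt u a m) \<xi> = interp dt u a m \<xi>"
  unfolding ipoly_def interp_def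
  by (simp add: poly_sum poly_prod prod_dividef)

lemma degree_ipoly: "degree (ipoly dt u a m) \<le> m"
  unfolding ipoly_def
proof (rule degree_sum_le[OF finite_atLeastAtMost])
  fix l assume l: "l \<in> {0..m}"
  have "degree (\<Prod>r\<in>{0..m} - {l}. [: - (real_of_int (a + int r) * dt), 1 :]) = m"
    using l by (subst degree_prod_sum_eq) auto
  then show "degree (smult (u (real_of_int (a + int l) * dt) /
      (\<Prod>r\<in>{0..m} - {l}. (real_of_int (a + int l) * dt - real_of_int (a + int r) * dt)))
      (\<Prod>r\<in>{0..m} - {l}. [: - (real_of_int (a + int r) * dt), 1 :])) \<le> m"
    by (metis degree_smult_le)
qed

lemma ipoly_node:
  assumes "dt \<noteq> 0" "l0 \<le> m"
  shows "poly (ipoly dt u a m) (real_of_int (a + int l0) * dt) = u (real_of_int (a + int l0) * dt)"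
proof -
  let ?x = "\<lambda>l. real_of_int (a + int l) * dt"
  have neq: "?x l - ?x r \<noteq> 0" if "l \<noteq> r" for l r using assms(1) that by simp
  have "interp dt u a m (?x l0) = (\<Sum>l\<in>{0..m}. u (?x l) *
      (\<Prod>r\<in>{0..m} - {l}. (?x l0 - ?x r) / (?x l - ?x r)))"
    by (simp add: interp_def)
  also have "\<dots> = u (?x l0) * (\<Prod>r\<in>{0..m} - {l0}. (?x l0 - ?x r) / (?x l0 - ?x r))
      + (\<Sum>l\<in>{0..m} - {l0}. u (?x l) * (\<Prod>r\<in>{0..m} - {l}. (?x l0 - ?x r) / (?x l - ?x r)))"
    using assms(2) by (subst sum.remove[of _ l0]) auto
  also have "(\<Sum>l\<in>{0..m} - {l0}. u (?x l) * (\<Prod>r\<in>{0..m} - {l}. (?x l0 - ?x r) / (?x l - ?x r))) = 0"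
  proof (rule sum.neutral, rule ballI)
    fix l assume l: "l \<in> {0..m} - {l0}"
    have "(\<Prod>r\<in>{0..m} - {l}. (?x l0 - ?x r) / (?x l - ?x r)) = 0"
      using l assms(2) by (intro prod_zero) (auto intro!: bexI[of _ l0])
    then show "u (?x l) * (\<Prod>r\<in>{0..m} - {l}. (?x l0 - ?x r) / (?x l - ?x r)) = 0" by simp
  qed
  also have "(\<Prod>r\<in>{0..m} - {l0}. (?x l0 - ?x r) / (?x l0 - ?x r)) = 1"
    by (rule prod.neutral) (use neq in auto)
  finally show ?thesis by (simp add: poly_ipoly)
qed

lemma prod_bound_dist:
  fixes X :: "real set"
  assumes "finite X" "X \<subseteq> {lo..hi}" "\<xi> \<in> {lo..hi}"
  shows "(\<Prod>x\<in>X. \<bar>\<xi> - x\<bar>) \<le> (hi - lo) ^ card X"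
proof -
  have "(\<Prod>x\<in>X. \<bar>\<xi> - x\<bar>) \<le> (\<Prod>x\<in>X. hi - lo)"
    using assms by (intro prod_mono) (auto simp: subset_iff abs_if)
  then show ?thesis by simp
qed

lemma grid_err:
  fixes D :: "nat \<Rightarrow> real \<Rightarrow> real" and a :: int
  assumes dt: "0 < dt" and a: "0 \<le> a" and aT: "real_of_int (a + int m) * dt \<le> T"
    and der: "\<forall>j<Suc m. \<forall>x\<in>{0..T}. (D j has_real_derivative D (Suc j) x) (at x within {0..T})"
    and B: "\<forall>y\<in>{0..T}. \<bar>D (Suc m) y\<bar> \<le> B"
    and xi: "\<xi> \<in> {real_of_int a * dt .. real_of_int (a + int m) * dt}"
  shows "\<bar>D 0 \<xi> - poly (ipoly dt (D 0) a m) \<xi>\<bar> \<le> B * (real m * dt) ^ Suc m"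
proof -
  let ?lo = "real_of_int a * dt" and ?hi = "real_of_int (a + int m) * dt"
  let ?x = "\<lambda>l::nat. real_of_int (a + int l) * dt"
  have lo0: "0 \<le> ?lo" using a dt by simp
  have sub: "{?lo..?hi} \<subseteq> {0..T}" using lo0 aT by auto
  define X where "X = ?x ` {0..m}"
  have inj: "inj_on ?x {0..m}" using dt by (intro inj_onI) simp
  have cX: "card X = Suc m" using inj by (simp add: X_def card_image)
  have fX: "finite X" by (simp add: X_def)
  have sX: "X \<subseteq> {?lo..?hi}" unfolding X_def using dt by (auto intro!: mult_right_mono)
  have der': "\<forall>j<Suc m. \<forall>x\<in>{?lo..?hi}. (D j has_real_derivative D (Suc j) x) (at x within {?lo..?hi})"
    using der sub by (meson DERIV_subset subsetD)
  have agree: "\<forall>x\<in>X. D 0 x = poly (ipoly dt (D 0) a m) x"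
    unfolding X_def using ipoly_node[of dt] dt by auto
  have B': "\<forall>y\<in>{?lo..?hi}. \<bar>D (Suc m) y\<bar> \<le> B" using B sub by auto
  have B0: "0 \<le> B" using B' xi by (meson abs_ge_zero order_trans)
  have "\<bar>D 0 \<xi> - poly (ipoly dt (D 0) a m) \<xi>\<bar> \<le> B / fact (Suc m) * (\<Prod>x\<in>X. \<bar>\<xi> - x\<bar>)"
    by (rule interp_error[OF der' degree_ipoly fX cX sX agree B' xi])
  also have "\<dots> \<le> B / fact (Suc m) * (?hi - ?lo) ^ Suc m"
    using prod_bound_dist[OF fX sX xi] cX B0 by (intro mult_left_mono) auto
  also have "\<dots> \<le> B * (?hi - ?lo) ^ Suc m"
  proof -
    have nn: "0 \<le> (?hi - ?lo) ^ Suc m" using dt by simp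
    have le: "B / fact (Suc m) \<le> B / 1"
      by (rule divide_left_mono) (use B0 fact_ge_1[of "Suc m", where 'a=real] in \<open>auto simp del: fact_Suc\<close>)
    show ?thesis using mult_right_mono[OF le nn] by (simp only: div_by_1)
  qed
  also have "?hi - ?lo = real m * dt" by (simp add: algebra_simps)
  finally show ?thesis .
qed

lemma grid_err_deriv:
  fixes D :: "nat \<Rightarrow> real \<Rightarrow> real" and a :: int
  assumes dt: "0 < dt" and a: "0 \<le> a" and aT: "real_of_int (a + int (Suc m)) * dt \<le> T"
    and der: "\<forall>j<Suc (Suc m). \<forall>x\<in>{0..T}. (D j has_real_derivative D (Suc j) x) (at x within {0..T})"
    and B: "\<forall>y\<in>{0..T}. \<bar>D (Suc (Suc m)) y\<bar> \<le> B"
    and xi: "\<xi> \<in> {real_of_int a * dt .. real_of_int (a + int (Suc m)) * dt}"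
  shows "\<bar>D 1 \<xi> - poly (pderiv (ipoly dt (D 0) a (Suc m))) \<xi>\<bar> \<le> B * (real (Suc m) * dt) ^ Suc m"
proof -
  let ?lo = "real_of_int a * dt" and ?hi = "real_of_int (a + int (Suc m)) * dt"
  let ?x = "\<lambda>l::nat. real_of_int (a + int l) * dt"
  let ?Q = "ipoly dt (D 0) a (Suc m)"
  have lo0: "0 \<le> ?lo" using a dt by simp
  have sub: "{?lo..?hi} \<subseteq> {0..T}" using lo0 aT by auto
  have der': "\<forall>j<Suc (Suc m). \<forall>x\<in>{?lo..?hi}. (D j has_real_derivative D (Suc j) x) (at x within {?lo..?hi})"
    using der sub by (meson DERIV_subset subsetD)
  define E where "E x = D 0 x - poly ?Q x" for x
  define E' where "E' x = D 1 x - poly (pderiv ?Q) x" for x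
  have dE: "\<forall>x\<in>{?lo..?hi}. (E has_real_derivative E' x) (at x within {?lo..?hi})"
  proof
    fix x assume x: "x \<in> {?lo..?hi}"
    have "(D 0 has_real_derivative D 1 x) (at x within {?lo..?hi})" using der' x by auto
    moreover have "((\<lambda>x. poly ?Q x) has_real_derivative poly (pderiv ?Q) x) (at x within {?lo..?hi})"
      by (rule has_field_derivative_at_within) simp
    ultimately show "(E has_real_derivative E' x) (at x within {?lo..?hi})"
      unfolding E_def[abs_def] E'_def by (rule DERIV_diff)
  qed
  have Ez: "E (?x l) = 0" if "l \<le> Suc m" for l
    using ipoly_node[of dt l "Suc m" "D 0" a] dt that by (simp add: E_def)
  have "\<forall>l. \<exists>s. l < Suc m \<longrightarrow> ?x l < s \<and> s < ?x (Suc l) \<and> E' s = 0"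
  proof
    fix l
    show "\<exists>s. l < Suc m \<longrightarrow> ?x l < s \<and> s < ?x (Suc l) \<and> E' s = 0"
    proof (cases "l < Suc m")
      case True
      have 1: "?x l < ?x (Suc l)" using dt by simp
      have 2: "{?x l..?x (Suc l)} \<subseteq> {?lo..?hi}" using True dt
        by (auto intro: order_trans[OF mult_right_mono] simp del: of_int_add)
      have "\<exists>s. ?x l < s \<and> s < ?x (Suc l) \<and> E' s = 0"
        using rolle_within[OF 1 2 Ez Ez dE] True by simp
      then show ?thesis by blast
    qed simp
  qed
  then obtain s where s: "\<And>l. l < Suc m \<Longrightarrow> ?x l < s l \<and> s l < ?x (Suc l) \<and> E' (s l) = 0"
    by metis
  have smono: "s l < s l'" if "l < l'" "l' < Suc m" for l l'
  proof -
    have "s l < ?x (Suc l)" using s that by auto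
    also have "?x (Suc l) \<le> ?x l'" using that dt by (intro mult_right_mono) auto
    also have "\<dots> < s l'" using s that by auto
    finally show ?thesis .
  qed
  have inj: "inj_on s {..<Suc m}"
    by (intro inj_onI) (metis lessThan_iff linorder_neqE_nat order_less_irrefl smono)
  define S where "S = s ` {..<Suc m}"
  have cS: "card S = Suc m" using inj by (simp add: S_def card_image)
  have fS: "finite S" by (simp add: S_def)
  have sS: "S \<subseteq> {?lo..?hi}"
  proof
    fix y assume "y \<in> S"
    then obtain l where l: "l < Suc m" "y = s l" by (auto simp: S_def)
    have "?lo \<le> ?x l" using dt by (intro mult_right_mono) auto
    moreover have "?x (Suc l) \<le> ?hi" using dt l by (intro mult_right_mono) auto
    ultimately show "y \<in> {?lo..?hi}" using s[OF l(1)] l by auto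
  qed
  have der'': "\<forall>j<Suc m. \<forall>x\<in>{?lo..?hi}. ((\<lambda>j. D (Suc j)) j has_real_derivative (\<lambda>j. D (Suc j)) (Suc j) x) (at x within {?lo..?hi})"
    using der' by auto
  have dq: "degree (pderiv ?Q) \<le> m" using degree_ipoly[of dt "D 0" a "Suc m"] by (simp add: degree_pderiv)
  have agree: "\<forall>x\<in>S. (\<lambda>j. D (Suc j)) 0 x = poly (pderiv ?Q) x"
    using s by (auto simp: S_def E'_def)
  have B': "\<forall>y\<in>{?lo..?hi}. \<bar>(\<lambda>j. D (Suc j)) (Suc m) y\<bar> \<le> B" using B sub by auto
  have B0: "0 \<le> B" using B' xi by (meson abs_ge_zero order_trans)
  have "\<bar>(\<lambda>j. D (Suc j)) 0 \<xi> - poly (pderiv ?Q) \<xi>\<bar> \<le> B / fact (Suc m) * (\<Prod>x\<in>S. \<bar>\<xi> - x\<bar>)"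
    by (rule interp_error[OF der'' dq fS cS sS agree B' xi])
  also have "\<dots> \<le> B / fact (Suc m) * (?hi - ?lo) ^ Suc m"
    using prod_bound_dist[OF fS sS xi] cS B0 by (intro mult_left_mono) auto
  also have "\<dots> \<le> B * (?hi - ?lo) ^ Suc m"
  proof -
    have nn: "0 \<le> (?hi - ?lo) ^ Suc m" using dt by simp
    have le: "B / fact (Suc m) \<le> B / 1"
      by (rule divide_left_mono) (use B0 fact_ge_1[of "Suc m", where 'a=real] in \<open>auto simp del: fact_Suc\<close>)
    show ?thesis using mult_right_mono[OF le nn] by (simp only: div_by_1)
  qed
  also have "?hi - ?lo = real (Suc m) * dt" by (simp add: algebra_simps)
  finally show ?thesis by simp
qed



lemma kernel_deriv:
  assumes "\<xi> < tn"
  shows "((\<lambda>\<xi>. (tn - \<xi>) powr c) has_real_derivative - c * (tn - \<xi>) powr (c - 1)) (at \<xi> within S)"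
proof -
  have "((\<lambda>\<xi>. (tn - \<xi>) powr c) has_real_derivative c * (tn - \<xi>) powr (c - 1) * (-1)) (at \<xi>)"
    using assms by (intro has_real_derivative_powr[THEN DERIV_chain2] derivative_eq_intros) auto
  then have "((\<lambda>\<xi>. (tn - \<xi>) powr c) has_real_derivative - c * (tn - \<xi>) powr (c - 1)) (at \<xi>)"
    by (simp only: mult_minus1_right mult_minus_left)
  then show ?thesis by (rule has_field_derivative_at_within)
qed

lemma kernel_integral:
  fixes \<alpha> :: real
  assumes "0 < \<alpha>" "\<alpha> < 1" "lo \<le> hi" "hi \<le> tn"
  shows "((\<lambda>\<xi>. (tn - \<xi>) powr (-\<alpha>)) has_integral
           ((tn - lo) powr (1 - \<alpha>) - (tn - hi) powr (1 - \<alpha>)) / (1 - \<alpha>)) {lo..hi}"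
proof -
  define G where "G = (\<lambda>\<xi>::real. - ((tn - \<xi>) powr (1 - \<alpha>)) / (1 - \<alpha>))"
  have "((\<lambda>\<xi>. (tn - \<xi>) powr (-\<alpha>)) has_integral (G hi - G lo)) {lo..hi}"
  proof (rule fundamental_theorem_of_calculus_interior[OF assms(3)])
    have c1: "continuous_on {lo..hi} (\<lambda>\<xi>. (tn - \<xi>) powr (1 - \<alpha>))"
      apply (rule continuous_on_powr')
      apply (rule continuous_intros)+
      using assms by auto
    show "continuous_on {lo..hi} G"
      unfolding G_def by (intro continuous_on_divide continuous_on_minus c1 continuous_on_const) (use assms in auto)
    fix x assume x: "x \<in> {lo<..<hi}"
    then have "x < tn" using assms by auto
    have d: "((\<lambda>\<xi>. (tn - \<xi>) powr (1 - \<alpha>)) has_real_derivative - (1 - \<alpha>) * (tn - x) powr (1 - \<alpha> - 1)) (at x)"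
      using kernel_deriv[OF \<open>x < tn\<close>, of "1 - \<alpha>" UNIV] by simp
    have dG: "(G has_real_derivative (- (- (1 - \<alpha>) * (tn - x) powr (1 - \<alpha> - 1))) / (1 - \<alpha>)) (at x)"
      unfolding G_def by (rule DERIV_cdivide[OF DERIV_minus[OF d]])
    have e: "(- (- (1 - \<alpha>) * (tn - x) powr (1 - \<alpha> - 1))) / (1 - \<alpha>) = (tn - x) powr (-\<alpha>)"
    proof -
      have ne: "1 - \<alpha> \<noteq> 0" using assms by simp
      have ex: "1 - \<alpha> - 1 = - \<alpha>" by simp
      have g: "(- (- c * y)) / c = y" if "c \<noteq> 0" for c y :: real using that by simp
      show ?thesis by (simp only: g[OF ne] ex)
    qed
    show "(G has_vector_derivative (tn - x) powr (- \<alpha>)) (at x)"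
      using dG unfolding e has_real_derivative_iff_has_vector_derivative .
  qed
  moreover have "G hi - G lo = ((tn - lo) powr (1 - \<alpha>) - (tn - hi) powr (1 - \<alpha>)) / (1 - \<alpha>)"
    unfolding G_def by (simp add: diff_divide_distrib)
  ultimately show ?thesis by simp
qed

lemma kernel_cont:
  fixes \<alpha> :: real and g :: "real \<Rightarrow> real"
  assumes a: "0 < \<alpha>" "\<alpha> < 1" and lh: "lo \<le> hi" "hi \<le> tn"
    and cg: "continuous_on {lo..hi} g"
  shows "(\<lambda>\<xi>. (tn - \<xi>) powr (-\<alpha>) * g \<xi>) integrable_on {lo..hi}"
    and "(\<forall>x\<in>{lo..hi}. \<bar>g x\<bar> \<le> B) \<Longrightarrow>
       \<bar>integral {lo..hi} (\<lambda>\<xi>. (tn - \<xi>) powr (-\<alpha>) * g \<xi>)\<bar>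
         \<le> B * (((tn - lo) powr (1 - \<alpha>) - (tn - hi) powr (1 - \<alpha>)) / (1 - \<alpha>))"
proof -
  let ?K = "\<lambda>\<xi>::real. (tn - \<xi>) powr (-\<alpha>)"
  have KI: "(?K has_integral ((tn - lo) powr (1 - \<alpha>) - (tn - hi) powr (1 - \<alpha>)) / (1 - \<alpha>)) {lo..hi}"
    by (rule kernel_integral[OF a lh])
  then have Ki: "?K integrable_on {lo..hi}" by blast
  have Kabs: "?K absolutely_integrable_on {lo..hi}"
    by (rule nonnegative_absolutely_integrable_1[OF Ki]) simp
  have meas: "g \<in> borel_measurable (lebesgue_on {lo..hi})"
    by (rule continuous_imp_measurable_on_sets_lebesgue[OF cg]) simp
  have bnd: "bounded (g ` {lo..hi})"
    by (rule compact_imp_bounded, rule compact_continuous_image[OF cg]) simp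
  have "(\<lambda>x. g x * ?K x) absolutely_integrable_on {lo..hi}"
    by (rule absolutely_integrable_bounded_measurable_product_real[OF meas _ bnd Kabs]) simp
  then have "(\<lambda>x. g x * ?K x) integrable_on {lo..hi}"
    by (rule set_lebesgue_integral_eq_integral(1))
  then show I: "(\<lambda>\<xi>. ?K \<xi> * g \<xi>) integrable_on {lo..hi}" by (simp add: mult.commute)
  assume B: "\<forall>x\<in>{lo..hi}. \<bar>g x\<bar> \<le> B"
  have KBi: "(\<lambda>x. ?K x * B) integrable_on {lo..hi}" using Ki by (rule integrable_on_mult_left)
  have "\<bar>integral {lo..hi} (\<lambda>\<xi>. ?K \<xi> * g \<xi>)\<bar> \<le> integral {lo..hi} (\<lambda>x. ?K x * B)"
  proof -
    have "norm (integral {lo..hi} (\<lambda>\<xi>. ?K \<xi> * g \<xi>)) \<le> integral {lo..hi} (\<lambda>x. ?K x * B)"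
    proof (rule integral_norm_bound_integral[OF I KBi])
      fix x assume "x \<in> {lo..hi}"
      then show "norm (?K x * g x) \<le> ?K x * B" using B by (simp add: abs_mult mult_left_mono)
    qed
    then show ?thesis by simp
  qed
  also have "integral {lo..hi} (\<lambda>x. ?K x * B) = B * (((tn - lo) powr (1 - \<alpha>) - (tn - hi) powr (1 - \<alpha>)) / (1 - \<alpha>))"
    using integral_mult_left[of "{lo..hi}" ?K B] integral_unique[OF KI] by (simp add: mult.commute)
  finally show "\<bar>integral {lo..hi} (\<lambda>\<xi>. ?K \<xi> * g \<xi>)\<bar>
         \<le> B * (((tn - lo) powr (1 - \<alpha>) - (tn - hi) powr (1 - \<alpha>)) / (1 - \<alpha>))" .
qed

lemma integral_grid_sum:
  fixes h :: "real \<Rightarrow> real"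
  assumes dt: "0 < dt" and I: "\<forall>j\<in>{1..N}. h integrable_on {real (j - 1) * dt .. real j * dt}"
  shows "h integrable_on {0..real N * dt} \<and>
         integral {0..real N * dt} h = (\<Sum>j=1..N. integral {real (j - 1) * dt .. real j * dt} h)"
  using I
proof (induction N)
  case 0
  have "h integrable_on {0..0::real}" using integrable_on_refl[of h 0] by simp
  then show ?case by simp
next
  case (Suc N)
  have IH: "h integrable_on {0..real N * dt} \<and>
         integral {0..real N * dt} h = (\<Sum>j=1..N. integral {real (j - 1) * dt .. real j * dt} h)"
    using Suc.IH Suc.prems by auto
  have last: "h integrable_on {real N * dt .. real (Suc N) * dt}"
    using bspec[OF Suc.prems, of "Suc N"] by simp
  have le1: "0 \<le> real N * dt" using dt by simp
  have le2: "real N * dt \<le> real (Suc N) * dt" using dt by simp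
  have int: "h integrable_on {0..real (Suc N) * dt}"
    using Henstock_Kurzweil_Integration.integrable_combine[OF le1 le2] IH last by blast
  have "integral {0..real (Suc N) * dt} h = integral {0..real N * dt} h + integral {real N * dt .. real (Suc N) * dt} h"
    using Henstock_Kurzweil_Integration.integral_combine[OF le1 le2 int] by simp
  also have "\<dots> = (\<Sum>j=1..Suc N. integral {real (j - 1) * dt .. real j * dt} h)"
    using IH by simp
  finally show ?case using int by blast
qed

lemma kprime:
  fixes \<alpha> :: real
  assumes "x < tn"
  shows "((\<lambda>\<xi>. (tn - \<xi>) powr (-\<alpha>)) has_real_derivative \<alpha> * (tn - x) powr (-\<alpha> - 1)) (at x within S)"
  using kernel_deriv[OF assms, of "-\<alpha>" S] by (simp only: minus_minus)

lemma ibp_piece: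
  fixes \<alpha> :: real and E E' :: "real \<Rightarrow> real"
  assumes a: "0 < \<alpha>" "\<alpha> < 1" and lh: "lo \<le> hi" "hi < tn"
    and dE: "\<forall>x\<in>{lo..hi}. (E has_real_derivative E' x) (at x within {lo..hi})"
    and cE': "continuous_on {lo..hi} E'"
    and E0: "E lo = 0" "E hi = 0"
    and B: "\<forall>x\<in>{lo..hi}. \<bar>E x\<bar> \<le> B"
  shows "\<bar>integral {lo..hi} (\<lambda>\<xi>. (tn - \<xi>) powr (-\<alpha>) * E' \<xi>)\<bar>
           \<le> B * ((tn - hi) powr (-\<alpha>) - (tn - lo) powr (-\<alpha>))"
    and "\<forall>x\<in>{lo..hi}. \<alpha> * (tn - x) powr (-\<alpha> - 1) \<le> c \<Longrightarrow>
         \<bar>integral {lo..hi} (\<lambda>\<xi>. (tn - \<xi>) powr (-\<alpha>) * E' \<xi>)\<bar> \<le> B * (c * (hi - lo))"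
proof -
  define K where "K \<xi> = (tn - \<xi>) powr (-\<alpha>)" for \<xi>
  define K' where "K' \<xi> = \<alpha> * (tn - \<xi>) powr (-\<alpha> - 1)" for \<xi>
  have pos: "0 < tn - x" if "x \<in> {lo..hi}" for x using that lh by auto
  have dK: "(K has_real_derivative K' x) (at x within {lo..hi})" if "x \<in> {lo..hi}" for x
    unfolding K_def[abs_def] K'_def using kprime pos[OF that] by simp
  have cE: "continuous_on {lo..hi} E"
    using dE by (meson DERIV_continuous continuous_on_eq_continuous_within)
  have cK': "continuous_on {lo..hi} K'"
    unfolding K'_def[abs_def]
    by (intro continuous_on_mult continuous_on_const continuous_on_powr continuous_on_diff continuous_on_id)
       (use pos in force)
  have B0: "0 \<le> B" using B lh by (meson abs_ge_zero atLeastAtMost_iff order_refl order_trans)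
  have K'nn: "0 \<le> K' x" for x using a by (simp add: K'_def)
  have FTC: "((\<lambda>x. K' x * E x + E' x * K x) has_integral (K hi * E hi - K lo * E lo)) {lo..hi}"
  proof (rule fundamental_theorem_of_calculus[OF lh(1)])
    fix x assume x: "x \<in> {lo..hi}"
    have "((\<lambda>x. K x * E x) has_real_derivative K' x * E x + E' x * K x) (at x within {lo..hi})"
      by (rule DERIV_mult[OF dK[OF x]]) (use dE x in auto)
    then show "((\<lambda>x. K x * E x) has_vector_derivative K' x * E x + E' x * K x) (at x within {lo..hi})"
      by (simp only: has_real_derivative_iff_has_vector_derivative)
  qed
  have I1: "(\<lambda>x. K' x * E x) integrable_on {lo..hi}"
    by (rule integrable_continuous_interval, intro continuous_on_mult cK' cE)
  have "((\<lambda>x. (K' x * E x + E' x * K x) - K' x * E x) has_integral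
          (K hi * E hi - K lo * E lo) - integral {lo..hi} (\<lambda>x. K' x * E x)) {lo..hi}"
    by (rule has_integral_diff[OF FTC integrable_integral[OF I1]])
  then have main: "((\<lambda>\<xi>. (tn - \<xi>) powr (-\<alpha>) * E' \<xi>) has_integral - integral {lo..hi} (\<lambda>x. K' x * E x)) {lo..hi}"
    by (simp add: E0 K_def mult.commute)
  have KBi: "(\<lambda>x. K' x * B) integrable_on {lo..hi}"
    by (rule integrable_continuous_interval, intro continuous_on_mult cK' continuous_on_const)
  have bound: "\<bar>integral {lo..hi} (\<lambda>\<xi>. (tn - \<xi>) powr (-\<alpha>) * E' \<xi>)\<bar> \<le> integral {lo..hi} (\<lambda>x. K' x * B)"
  proof -
    have "norm (integral {lo..hi} (\<lambda>x. K' x * E x)) \<le> integral {lo..hi} (\<lambda>x. K' x * B)"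
    proof (rule integral_norm_bound_integral[OF I1 KBi])
      fix x assume "x \<in> {lo..hi}"
      then show "norm (K' x * E x) \<le> K' x * B" using B K'nn[of x] by (simp add: abs_mult mult_left_mono)
    qed
    then show ?thesis using integral_unique[OF main] by simp
  qed
  have K'I: "(K' has_integral (K hi - K lo)) {lo..hi}"
    by (rule fundamental_theorem_of_calculus[OF lh(1)])
       (use dK in \<open>simp add: has_real_derivative_iff_has_vector_derivative\<close>)
  have e1: "integral {lo..hi} (\<lambda>x. K' x * B) = integral {lo..hi} K' * B"
    by (rule integral_mult_left)
  have e2: "integral {lo..hi} K' = (tn - hi) powr (-\<alpha>) - (tn - lo) powr (-\<alpha>)"
    using integral_unique[OF K'I] by (simp add: K_def)
  show "\<bar>integral {lo..hi} (\<lambda>\<xi>. (tn - \<xi>) powr (-\<alpha>) * E' \<xi>)\<bar>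
           \<le> B * ((tn - hi) powr (-\<alpha>) - (tn - lo) powr (-\<alpha>))"
    using bound unfolding e1 e2 by (simp add: mult.commute)
  assume c: "\<forall>x\<in>{lo..hi}. \<alpha> * (tn - x) powr (-\<alpha> - 1) \<le> c"
  have "integral {lo..hi} (\<lambda>x. K' x * B) \<le> integral {lo..hi} (\<lambda>x. c * B)"
    by (rule integral_le[OF KBi]) (use c B0 in \<open>auto simp: K'_def intro: mult_right_mono\<close>)
  also have "\<dots> = B * (c * (hi - lo))" using lh by simp
  finally show "\<bar>integral {lo..hi} (\<lambda>\<xi>. (tn - \<xi>) powr (-\<alpha>) * E' \<xi>)\<bar> \<le> B * (c * (hi - lo))"
    using bound by linarith
qed



definition aidx :: "nat \<Rightarrow> nat \<Rightarrow> nat \<Rightarrow> nat \<Rightarrow> int" where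
  "aidx k i n j = (if int j \<le> int k - int i then 0
      else if int j \<le> int n - int i + 1 then int j + int i - int k - 1 else int n - int k)"

definition midx :: "nat \<Rightarrow> nat \<Rightarrow> nat \<Rightarrow> nat" where
  "midx k i j = (if int j \<le> int k - int i then k - 1 else k)"

lemma idx_props:
  assumes "1 \<le> i" "i \<le> k" "k \<le> n" "1 \<le> j" "j \<le> n"
  shows "0 \<le> aidx k i n j" "aidx k i n j \<le> int j - 1" "int j \<le> aidx k i n j + int (midx k i j)"
    "aidx k i n j + int (midx k i j) \<le> int n"
    "int j \<le> int k - int i \<Longrightarrow> midx k i j = k - 1"
    "\<not> int j \<le> int k - int i \<Longrightarrow> midx k i j = k"
    "j = n \<Longrightarrow> midx k i j = k \<and> aidx k i n j = int n - int k"
  using assms unfolding aidx_def midx_def by auto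

lemma interval_index_eq:
  assumes "0 < dt" "1 \<le> j" "\<xi> \<in> {real (j - 1) * dt <..< real j * dt}"
  shows "interval_index dt \<xi> = int j"
proof -
  have "real (j - 1) < \<xi> / dt" "\<xi> / dt < real j"
    using assms by (auto simp: field_simps)
  then have "\<lceil>\<xi> / dt\<rceil> = int j"
    using assms(2) by (intro ceiling_unique) (auto simp: of_nat_diff)
  then show ?thesis using assms(2) by (simp add: interval_index_def)
qed

lemma Ppw_piece:
  assumes "0 < dt" "1 \<le> i" "i \<le> k" "k \<le> n" "1 \<le> j" "j \<le> n"
    "\<xi> \<in> {real (j - 1) * dt <..< real j * dt}"
  shows "Ppw dt u k i n \<xi> = poly (ipoly dt u (aidx k i n j) (midx k i j)) \<xi>"
proof -
  have ii: "interval_index dt \<xi> = int j" using interval_index_eq assms(1,5,7) by blast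
  have k1: "int (k - 1) = int k - 1" using assms by simp
  show ?thesis
    unfolding Ppw_def Let_def ii pjq_def poly_ipoly aidx_def midx_def
    using k1 by (auto simp: algebra_simps)
qed

lemma deriv_Ppw:
  assumes "0 < dt" "1 \<le> i" "i \<le> k" "k \<le> n" "1 \<le> j" "j \<le> n"
    "\<xi> \<in> {real (j - 1) * dt <..< real j * dt}"
  shows "deriv (Ppw dt u k i n) \<xi> = poly (pderiv (ipoly dt u (aidx k i n j) (midx k i j))) \<xi>"
proof -
  let ?Q = "ipoly dt u (aidx k i n j) (midx k i j)"
  have "(Ppw dt u k i n has_field_derivative poly (pderiv ?Q) \<xi>) (at \<xi>)"
  proof (rule has_field_derivative_transform_within_open[OF poly_DERIV])
    show "open {real (j - 1) * dt <..< real j * dt}" by simp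
    show "\<xi> \<in> {real (j - 1) * dt <..< real j * dt}" by (rule assms(7))
    fix y assume "y \<in> {real (j - 1) * dt <..< real j * dt}"
    then show "poly ?Q y = Ppw dt u k i n y" using Ppw_piece[OF assms(1-6)] by simp
  qed
  then show ?thesis by (rule DERIV_imp_deriv)
qed

lemma telescope_nat:
  fixes F :: "nat \<Rightarrow> real"
  shows "(\<Sum>j=1..N. F j - F (j - 1)) = F N - F 0"
  by (induction N) auto

lemma node_at:
  assumes "0 < dt" "a \<le> int p" "int p \<le> a + int m"
  shows "poly (ipoly dt u a m) (real p * dt) = u (real p * dt)"
proof -
  define l0 where "l0 = nat (int p - a)"
  have e: "a + int l0 = int p" using assms by (simp add: l0_def)
  have "l0 \<le> m" using assms by (simp add: l0_def)
  from ipoly_node[OF _ this, of dt u a] assms(1) e show ?thesis by simp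
qed

locale est =
  fixes \<alpha> T dt Bnd :: real and u :: "real \<Rightarrow> real" and D :: "nat \<Rightarrow> real \<Rightarrow> real" and k i n :: nat
  assumes a: "0 < \<alpha>" "\<alpha> < 1" and dt: "0 < dt" and nT: "real n * dt \<le> T"
    and ik: "1 \<le> i" "i \<le> k" "k \<le> n"
    and D0: "D 0 = u"
    and der: "\<forall>j<k+1. \<forall>x\<in>{0..T}. (D j has_real_derivative D (Suc j) x) (at x within {0..T})"
    and cD1: "continuous_on {0..T} (D 1)"
    and Bnd: "\<forall>j\<le>k+1. \<forall>x\<in>{0..T}. \<bar>D j x\<bar> \<le> Bnd"
begin

definition Q :: "nat \<Rightarrow> real poly" where "Q j = ipoly dt u (aidx k i n j) (midx k i j)"

definition pc :: "nat \<Rightarrow> real" where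
  "pc j = integral {real (j - 1) * dt .. real j * dt}
     (\<lambda>\<xi>. (real n * dt - \<xi>) powr (-\<alpha>) * (poly (pderiv (Q j)) \<xi> - D 1 \<xi>))"

lemma Bnd0: "0 \<le> Bnd"
proof -
  have "0 \<le> T" using nT dt ik by (meson mult_nonneg_nonneg of_nat_0_le_iff order_trans less_imp_le)
  then show ?thesis using Bnd by (meson abs_ge_zero atLeastAtMost_iff le0 order_refl order_trans)
qed

lemma Ij_sub:
  assumes "1 \<le> j" "j \<le> n"
  shows "{real (j - 1) * dt .. real j * dt} \<subseteq> {0..T}"
proof -
  have "real j * dt \<le> real n * dt" using assms dt by (intro mult_right_mono) auto
  then have h: "real j * dt \<le> T" using nT by linarith
  have h0: "0 \<le> real (j - 1) * dt" using dt by simp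
  show ?thesis using h h0 by auto
qed

lemma Ij_grid:
  assumes "1 \<le> j" "j \<le> n"
  shows "{real (j - 1) * dt .. real j * dt} \<subseteq>
     {real_of_int (aidx k i n j) * dt .. real_of_int (aidx k i n j + int (midx k i j)) * dt}"
    and "real_of_int (aidx k i n j + int (midx k i j)) * dt \<le> T"
proof -
  note p = idx_props[OF ik assms]
  have "real_of_int (aidx k i n j) \<le> real (j - 1)" using p(2) assms by linarith
  moreover have "real j \<le> real_of_int (aidx k i n j + int (midx k i j))" using p(3) by linarith
  ultimately show "{real (j - 1) * dt .. real j * dt} \<subseteq>
     {real_of_int (aidx k i n j) * dt .. real_of_int (aidx k i n j + int (midx k i j)) * dt}"
    using dt by (auto intro: order_trans[OF mult_right_mono])
  have "real_of_int (aidx k i n j + int (midx k i j)) \<le> real n" using p(4) by linarith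
  then have "real_of_int (aidx k i n j + int (midx k i j)) * dt \<le> real n * dt" using dt by (intro mult_right_mono) auto
  then show "real_of_int (aidx k i n j + int (midx k i j)) * dt \<le> T" using nT by linarith
qed

lemma E_err:
  assumes "1 \<le> j" "j \<le> n" "x \<in> {real (j - 1) * dt .. real j * dt}"
  shows "\<bar>poly (Q j) x - D 0 x\<bar> \<le> Bnd * (real (midx k i j) * dt) ^ Suc (midx k i j)"
proof -
  note p = idx_props[OF ik assms(1,2)]
  have mk: "midx k i j \<le> k" using p(5,6) by (cases "int j \<le> int k - int i") auto
  have der': "\<forall>jj<Suc (midx k i j). \<forall>x\<in>{0..T}. (D jj has_real_derivative D (Suc jj) x) (at x within {0..T})"
    using der mk by auto
  have B': "\<forall>y\<in>{0..T}. \<bar>D (Suc (midx k i j)) y\<bar> \<le> Bnd" using Bnd mk by auto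
  have "\<bar>D 0 x - poly (ipoly dt (D 0) (aidx k i n j) (midx k i j)) x\<bar> \<le> Bnd * (real (midx k i j) * dt) ^ Suc (midx k i j)"
    by (rule grid_err[OF dt p(1) Ij_grid(2)[OF assms(1,2)] der' B']) (use Ij_grid(1)[OF assms(1,2)] assms(3) in blast)
  then show ?thesis by (simp add: Q_def D0 abs_minus_commute)
qed

lemma D1_err:
  assumes "1 \<le> n" "x \<in> {real (n - 1) * dt .. real n * dt}"
  shows "\<bar>poly (pderiv (Q n)) x - D 1 x\<bar> \<le> Bnd * (real k * dt) ^ k"
proof -
  have n1: "1 \<le> n" "n \<le> n" using assms by auto
  note p = idx_props[OF ik n1]
  obtain m where m: "k = Suc m" using ik by (cases k) auto
  have am: "aidx k i n n = int n - int k" "midx k i n = k" using p(7) by auto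
  have der': "\<forall>jj<Suc (Suc m). \<forall>x\<in>{0..T}. (D jj has_real_derivative D (Suc jj) x) (at x within {0..T})"
    using der m by auto
  have B': "\<forall>y\<in>{0..T}. \<bar>D (Suc (Suc m)) y\<bar> \<le> Bnd" using Bnd m by auto
  have a0: "0 \<le> int n - int k" using ik by simp
  have aT: "real_of_int (int n - int k + int (Suc m)) * dt \<le> T" using nT m by simp
  have xi: "x \<in> {real_of_int (int n - int k) * dt .. real_of_int (int n - int k + int (Suc m)) * dt}"
  proof -
    from Ij_grid(1)[OF n1] assms(2) have
      "x \<in> {real_of_int (aidx k i n n) * dt .. real_of_int (aidx k i n n + int (midx k i n)) * dt}" by blast
    then show ?thesis using am by (simp add: m)
  qed
  have "\<bar>D 1 x - poly (pderiv (ipoly dt (D 0) (int n - int k) (Suc m))) x\<bar> \<le> Bnd * (real (Suc m) * dt) ^ Suc m"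
    by (rule grid_err_deriv[OF dt a0 aT der' B' xi])
  moreover have qn: "Q n = ipoly dt u (int n - int k) k" using am by (simp add: Q_def)
  ultimately show ?thesis using m by (simp add: D0 abs_minus_commute)
qed

lemma pc_inner:
  assumes j: "1 \<le> j" "j < n"
  shows "\<bar>pc j\<bar> \<le> Bnd * (real (midx k i j) * dt) ^ Suc (midx k i j) *
            ((real n * dt - real j * dt) powr (-\<alpha>) - (real n * dt - real (j - 1) * dt) powr (-\<alpha>))"
    and "\<forall>x\<in>{real (j - 1) * dt .. real j * dt}. \<alpha> * (real n * dt - x) powr (-\<alpha> - 1) \<le> c \<Longrightarrow>
         \<bar>pc j\<bar> \<le> Bnd * (real (midx k i j) * dt) ^ Suc (midx k i j) * (c * dt)"
proof -
  have jn: "j \<le> n" using j by simp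
  note p = idx_props[OF ik j(1) jn]
  let ?lo = "real (j - 1) * dt" and ?hi = "real j * dt"
  define E where "E x = poly (Q j) x - D 0 x" for x
  define E' where "E' x = poly (pderiv (Q j)) x - D 1 x" for x
  have lh: "?lo \<le> ?hi" "?hi < real n * dt" using dt j by auto
  have sub: "{?lo..?hi} \<subseteq> {0..T}" by (rule Ij_sub[OF j(1) jn])
  have dE: "\<forall>x\<in>{?lo..?hi}. (E has_real_derivative E' x) (at x within {?lo..?hi})"
  proof
    fix x assume x: "x \<in> {?lo..?hi}"
    have "(D 0 has_real_derivative D 1 x) (at x within {0..T})" using der x sub by auto
    then have d0: "(D 0 has_real_derivative D 1 x) (at x within {?lo..?hi})" using sub by (rule DERIV_subset)
    have dp: "((\<lambda>x. poly (Q j) x) has_real_derivative poly (pderiv (Q j)) x) (at x within {?lo..?hi})"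
      by (rule has_field_derivative_at_within) simp
    show "(E has_real_derivative E' x) (at x within {?lo..?hi})"
      unfolding E_def[abs_def] E'_def by (rule DERIV_diff[OF dp d0])
  qed
  have cE': "continuous_on {?lo..?hi} E'"
    unfolding E'_def[abs_def]
    by (intro continuous_on_diff continuous_on_poly continuous_on_id continuous_on_subset[OF cD1 sub])
  have E0: "E ?lo = 0" "E ?hi = 0"
  proof -
    have "aidx k i n j \<le> int (j - 1)" "int (j - 1) \<le> aidx k i n j + int (midx k i j)" using p j by auto
    then show "E ?lo = 0" unfolding E_def Q_def using node_at[OF dt] by (simp add: D0)
    have "aidx k i n j \<le> int j" "int j \<le> aidx k i n j + int (midx k i j)" using p j by auto
    then show "E ?hi = 0" unfolding E_def Q_def using node_at[OF dt] by (simp add: D0)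
  qed
  have B: "\<forall>x\<in>{?lo..?hi}. \<bar>E x\<bar> \<le> Bnd * (real (midx k i j) * dt) ^ Suc (midx k i j)"
    using E_err[OF j(1) jn] by (simp add: E_def)
  note ibp = ibp_piece[OF a lh dE cE' E0 B]
  have pcE: "pc j = integral {?lo..?hi} (\<lambda>\<xi>. (real n * dt - \<xi>) powr (-\<alpha>) * E' \<xi>)"
    by (simp add: pc_def E'_def)
  show "\<bar>pc j\<bar> \<le> Bnd * (real (midx k i j) * dt) ^ Suc (midx k i j) *
            ((real n * dt - real j * dt) powr (-\<alpha>) - (real n * dt - real (j - 1) * dt) powr (-\<alpha>))"
    using ibp(1) unfolding pcE .
  assume c: "\<forall>x\<in>{real (j - 1) * dt .. real j * dt}. \<alpha> * (real n * dt - x) powr (-\<alpha> - 1) \<le> c"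
  have "?hi - ?lo = dt" using j by (simp add: of_nat_diff algebra_simps)
  then show "\<bar>pc j\<bar> \<le> Bnd * (real (midx k i j) * dt) ^ Suc (midx k i j) * (c * dt)"
    using ibp(2)[OF c] unfolding pcE by simp
qed

lemma pc_last:
  "\<bar>pc n\<bar> \<le> Bnd * (real k * dt) ^ k * (dt powr (1 - \<alpha>) / (1 - \<alpha>))"
proof -
  have n1: "1 \<le> n" using ik by simp
  let ?lo = "real (n - 1) * dt" and ?hi = "real n * dt"
  have lh: "?lo \<le> ?hi" "?hi \<le> real n * dt" using dt by auto
  have sub: "{?lo..?hi} \<subseteq> {0..T}" by (rule Ij_sub[OF n1 order_refl])
  have cg: "continuous_on {?lo..?hi} (\<lambda>x. poly (pderiv (Q n)) x - D 1 x)"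
    by (intro continuous_on_diff continuous_on_poly continuous_on_id continuous_on_subset[OF cD1 sub])
  have B: "\<forall>x\<in>{?lo..?hi}. \<bar>poly (pderiv (Q n)) x - D 1 x\<bar> \<le> Bnd * (real k * dt) ^ k"
    using D1_err[OF n1] by blast
  have "\<bar>pc n\<bar> \<le> Bnd * (real k * dt) ^ k * (((real n * dt - ?lo) powr (1 - \<alpha>) - (real n * dt - ?hi) powr (1 - \<alpha>)) / (1 - \<alpha>))"
    using kernel_cont(2)[OF a lh cg B] by (simp add: pc_def)
  moreover have "real n * dt - ?lo = dt" using n1 by (simp add: of_nat_diff algebra_simps)
  ultimately show ?thesis by simp
qed

lemma decomp:
  "Dapprox \<alpha> dt u k i n - caputo \<alpha> u (real n * dt) = (1 / Gamma (1 - \<alpha>)) * (\<Sum>j=1..n. pc j)"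
proof -
  let ?K = "\<lambda>\<xi>. (real n * dt - \<xi>) powr (-\<alpha>)"
  let ?I = "\<lambda>j. {real (j - 1) * dt .. real j * dt}"
  let ?h1 = "\<lambda>\<xi>. ?K \<xi> * deriv (Ppw dt u k i n) \<xi>"
  let ?h2 = "\<lambda>\<xi>. ?K \<xi> * deriv u \<xi>"
  let ?a = "\<lambda>j. integral (?I j) (\<lambda>\<xi>. ?K \<xi> * poly (pderiv (Q j)) \<xi>)"
  let ?b = "\<lambda>j. integral (?I j) (\<lambda>\<xi>. ?K \<xi> * D 1 \<xi>)"
  have facts: "(?h1 has_integral ?a j) (?I j) \<and> (?h2 has_integral ?b j) (?I j) \<and> pc j = ?a j - ?b j"
    if j: "j \<in> {1..n}" for j
  proof -
    have j1: "1 \<le> j" "j \<le> n" using j by auto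
    have sub: "?I j \<subseteq> {0..T}" by (rule Ij_sub[OF j1])
    have lh: "real (j - 1) * dt \<le> real j * dt" "real j * dt \<le> real n * dt" using dt j1 by auto
    have cp: "continuous_on (?I j) (\<lambda>\<xi>. poly (pderiv (Q j)) \<xi>)"
      by (intro continuous_on_poly continuous_on_id)
    have cd: "continuous_on (?I j) (D 1)" by (rule continuous_on_subset[OF cD1 sub])
    have ia: "(\<lambda>\<xi>. ?K \<xi> * poly (pderiv (Q j)) \<xi>) integrable_on ?I j" by (rule kernel_cont(1)[OF a lh cp])
    have ib: "(\<lambda>\<xi>. ?K \<xi> * D 1 \<xi>) integrable_on ?I j" by (rule kernel_cont(1)[OF a lh cd])
    have h1: "(?h1 has_integral ?a j) (?I j)"
    proof (rule has_integral_spike_finite[of "{real (j - 1) * dt, real j * dt}"])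
      show "finite {real (j - 1) * dt, real j * dt}" by simp
      show "((\<lambda>\<xi>. ?K \<xi> * poly (pderiv (Q j)) \<xi>) has_integral ?a j) (?I j)"
        using ia by (rule integrable_integral)
      fix x assume x: "x \<in> ?I j - {real (j - 1) * dt, real j * dt}"
      then have "x \<in> {real (j - 1) * dt <..< real j * dt}" by auto
      then have "deriv (Ppw dt u k i n) x = poly (pderiv (Q j)) x"
        using deriv_Ppw[OF dt ik j1] by (simp add: Q_def)
      then show "?h1 x = ?K x * poly (pderiv (Q j)) x" by simp
    qed
    have h2: "(?h2 has_integral ?b j) (?I j)"
    proof (rule has_integral_spike_finite[of "{real (j - 1) * dt, real j * dt}"])
      show "finite {real (j - 1) * dt, real j * dt}" by simp
      show "((\<lambda>\<xi>. ?K \<xi> * D 1 \<xi>) has_integral ?b j) (?I j)"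
        using ib by (rule integrable_integral)
      fix x assume x: "x \<in> ?I j - {real (j - 1) * dt, real j * dt}"
      then have xo: "real (j - 1) * dt < x" "x < real j * dt" by auto
      have x0: "0 < x" using xo(1) dt by (smt (verit) mult_nonneg_nonneg of_nat_0_le_iff)
      have xT: "x < T" using xo(2) lh(2) nT by linarith
      have "(D 0 has_real_derivative D 1 x) (at x within {0..T})" using der x0 xT by auto
      then have "(D 0 has_real_derivative D 1 x) (at x)" using at_within_Icc_at[OF x0 xT] by simp
      then have "deriv u x = D 1 x" using D0 DERIV_imp_deriv by blast
      then show "?h2 x = ?K x * D 1 x" by simp
    qed
    have "pc j = integral (?I j) (\<lambda>\<xi>. ?K \<xi> * poly (pderiv (Q j)) \<xi> - ?K \<xi> * D 1 \<xi>)"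
      by (simp add: pc_def right_diff_distrib)
    also have "\<dots> = ?a j - ?b j" by (rule integral_diff[OF ia ib])
    finally show ?thesis using h1 h2 by blast
  qed
  have g1: "?h1 integrable_on {0..real n * dt} \<and> integral {0..real n * dt} ?h1 = (\<Sum>j=1..n. integral (?I j) ?h1)"
    by (rule integral_grid_sum[OF dt]) (use facts in blast)
  have g2: "?h2 integrable_on {0..real n * dt} \<and> integral {0..real n * dt} ?h2 = (\<Sum>j=1..n. integral (?I j) ?h2)"
    by (rule integral_grid_sum[OF dt]) (use facts in blast)
  have s1: "(\<Sum>j=1..n. integral (?I j) ?h1) = (\<Sum>j=1..n. ?a j)"
    by (rule sum.cong) (use facts integral_unique in auto)
  have s2: "(\<Sum>j=1..n. integral (?I j) ?h2) = (\<Sum>j=1..n. ?b j)"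
    by (rule sum.cong) (use facts integral_unique in auto)
  have s3: "(\<Sum>j=1..n. pc j) = (\<Sum>j=1..n. ?a j) - (\<Sum>j=1..n. ?b j)"
    by (simp add: sum_subtractf[symmetric] facts)
  show ?thesis
    unfolding Dapprox_def caputo_def using g1 g2 s1 s2 s3 by (simp add: right_diff_distrib)
qed

lemma total:
  "\<bar>Dapprox \<alpha> dt u k i n - caputo \<alpha> u (real n * dt)\<bar> \<le> (1 / Gamma (1 - \<alpha>)) *
     ((if i < k then real k * (Bnd * (real k * dt) ^ k * ((\<alpha> * (real (n - k + i) * dt) powr (-\<alpha> - 1)) * dt)) else 0)
      + Bnd * (real k * dt) ^ (k + 1) * dt powr (-\<alpha>)
      + Bnd * (real k * dt) ^ k * (dt powr (1 - \<alpha>) / (1 - \<alpha>)))"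
proof -
  define c0 where "c0 = \<alpha> * (real (n - k + i) * dt) powr (-\<alpha> - 1)"
  define X where "X = Bnd * (real k * dt) ^ k * (c0 * dt)"
  define Bulk where "Bulk = Bnd * (real k * dt) ^ (k + 1)"
  define F where "F j = (real n * dt - real j * dt) powr (-\<alpha>)" for j
  define Ai where "Ai j = (if j \<in> {1..k} \<and> i < k then X else 0)" for j
  have G: "0 < Gamma (1 - \<alpha>)" using a by simp
  have B0: "0 \<le> Bnd" by (rule Bnd0)
  have c00: "0 \<le> c0" using a by (simp add: c0_def)
  have X0: "0 \<le> X" using B0 c00 dt by (simp add: X_def)
  have Bulk0: "0 \<le> Bulk" using B0 dt by (simp add: Bulk_def)
  have Ai0: "0 \<le> Ai j" for j using X0 by (simp add: Ai_def)
  obtain n' where n': "n = Suc n'" using ik by (cases n) auto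
  have Fmono: "F (j - 1) \<le> F j" if "1 \<le> j" "j < n" for j
  proof -
    have "0 < real n * dt - real j * dt" using that dt by simp
    moreover have "real n * dt - real j * dt \<le> real n * dt - real (j - 1) * dt" using dt that by simp
    ultimately show ?thesis unfolding F_def using a by (intro powr_mono2') auto
  qed
  have each: "\<bar>pc j\<bar> \<le> Ai j + Bulk * (F j - F (j - 1))" if j: "1 \<le> j" "j \<le> n'" for j
  proof -
    have jn: "j < n" "j \<le> n" using j n' by auto
    note p = idx_props[OF ik j(1) jn(2)]
    have bu0: "0 \<le> Bulk * (F j - F (j - 1))" using Bulk0 Fmono[OF j(1) jn(1)] by simp
    show ?thesis
    proof (cases "int j \<le> int k - int i")
      case True
      have jk: "j \<le> k - i" "i < k" "j \<le> k" using True j by auto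
      have m: "midx k i j = k - 1" using p(5)[OF True] .
      have c: "\<forall>x\<in>{real (j - 1) * dt .. real j * dt}. \<alpha> * (real n * dt - x) powr (-\<alpha> - 1) \<le> c0"
      proof
        fix x assume x: "x \<in> {real (j - 1) * dt .. real j * dt}"
        have "real j * dt \<le> real (k - i) * dt" using jk dt by (intro mult_right_mono) auto
        then have "real (n - k + i) * dt \<le> real n * dt - x"
          using x ik by (auto simp: of_nat_diff algebra_simps)
        moreover have "0 < real (n - k + i) * dt" using ik dt by simp
        ultimately have "(real n * dt - x) powr (-\<alpha> - 1) \<le> (real (n - k + i) * dt) powr (-\<alpha> - 1)"
          using a by (intro powr_mono2') auto
        then show "\<alpha> * (real n * dt - x) powr (-\<alpha> - 1) \<le> c0" using a by (simp add: c0_def)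
      qed
      have "\<bar>pc j\<bar> \<le> Bnd * (real (midx k i j) * dt) ^ Suc (midx k i j) * (c0 * dt)"
        by (rule pc_inner(2)[OF j(1) jn(1) c])
      also have "\<dots> = Bnd * (real (k - 1) * dt) ^ k * (c0 * dt)" using m ik by simp
      also have "\<dots> \<le> X"
      proof -
        have "(real (k - 1) * dt) ^ k \<le> (real k * dt) ^ k" using dt by (intro power_mono mult_right_mono) auto
        then show ?thesis unfolding X_def using B0 c00 dt by (intro mult_right_mono mult_left_mono) auto
      qed
      also have "X = Ai j" using jk j by (simp add: Ai_def)
      finally show ?thesis using bu0 by linarith
    next
      case False
      have m: "midx k i j = k" using p(6)[OF False] .
      have "\<bar>pc j\<bar> \<le> Bnd * (real (midx k i j) * dt) ^ Suc (midx k i j) *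
            ((real n * dt - real j * dt) powr (-\<alpha>) - (real n * dt - real (j - 1) * dt) powr (-\<alpha>))"
        by (rule pc_inner(1)[OF j(1) jn(1)])
      also have "\<dots> = Bulk * (F j - F (j - 1))" using m by (simp add: Bulk_def F_def)
      finally show ?thesis using Ai0[of j] by linarith
    qed
  qed
  have sumAi: "(\<Sum>j=1..n'. Ai j) \<le> (if i < k then real k * X else 0)"
  proof (cases "i < k")
    case True
    have "(\<Sum>j=1..n'. Ai j) = (\<Sum>j\<in>{1..n'}. if j \<in> {1..k} then X else 0)"
      using True by (simp add: Ai_def)
    also have "\<dots> = (\<Sum>j\<in>{1..n'} \<inter> {1..k}. X)" by (rule sum.inter_restrict[symmetric]) simp
    also have "\<dots> \<le> (\<Sum>j\<in>{1..k}. X)" using X0 by (intro sum_mono2) auto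
    also have "\<dots> = real k * X" by simp
    finally show ?thesis using True by simp
  next
    case False
    then show ?thesis by (simp add: Ai_def)
  qed
  have sumBu: "(\<Sum>j=1..n'. Bulk * (F j - F (j - 1))) \<le> Bulk * dt powr (-\<alpha>)"
  proof -
    have "(\<Sum>j=1..n'. Bulk * (F j - F (j - 1))) = Bulk * (F n' - F 0)"
      by (simp only: sum_distrib_left[symmetric] telescope_nat[of F n'])
    also have "\<dots> \<le> Bulk * F n'" using Bulk0 by (intro mult_left_mono) (auto simp: F_def)
    also have "F n' = dt powr (-\<alpha>)" by (simp add: F_def n' algebra_simps)
    finally show ?thesis .
  qed
  have "(\<Sum>j=1..n. \<bar>pc j\<bar>) = (\<Sum>j=1..n'. \<bar>pc j\<bar>) + \<bar>pc n\<bar>" by (simp add: n')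
  also have "(\<Sum>j=1..n'. \<bar>pc j\<bar>) \<le> (\<Sum>j=1..n'. Ai j + Bulk * (F j - F (j - 1)))"
    by (rule sum_mono) (use each in auto)
  also have "\<dots> = (\<Sum>j=1..n'. Ai j) + (\<Sum>j=1..n'. Bulk * (F j - F (j - 1)))" by (rule sum.distrib)
  finally have S: "(\<Sum>j=1..n. \<bar>pc j\<bar>) \<le> (if i < k then real k * X else 0) + Bulk * dt powr (-\<alpha>)
      + Bnd * (real k * dt) ^ k * (dt powr (1 - \<alpha>) / (1 - \<alpha>))"
    using sumAi sumBu pc_last by linarith
  have "\<bar>Dapprox \<alpha> dt u k i n - caputo \<alpha> u (real n * dt)\<bar> = (1 / Gamma (1 - \<alpha>)) * \<bar>\<Sum>j=1..n. pc j\<bar>"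
    using G by (simp add: decomp abs_mult)
  also have "\<dots> \<le> (1 / Gamma (1 - \<alpha>)) * (\<Sum>j=1..n. \<bar>pc j\<bar>)"
    using G by (intro mult_left_mono sum_abs) auto
  also have "\<dots> \<le> (1 / Gamma (1 - \<alpha>)) * ((if i < k then real k * X else 0) + Bulk * dt powr (-\<alpha>)
      + Bnd * (real k * dt) ^ k * (dt powr (1 - \<alpha>) / (1 - \<alpha>)))"
    using G S by (intro mult_left_mono) auto
  finally show ?thesis unfolding X_def c0_def Bulk_def .
qed

end

theorem theorem2p6:
  fixes \<alpha> T :: real and u :: "real \<Rightarrow> real" and k i :: nat
  assumes "0 < \<alpha>" "\<alpha> < 1" "0 < T"
    and "Ck_on (k + 1) {0..T} u"
    and "1 \<le> i" "i \<le> k" "k \<le> 6"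
  shows "\<exists>C. \<forall>M::nat. \<forall>n::nat. 1 \<le> M \<longrightarrow> k \<le> n \<longrightarrow> n \<le> M \<longrightarrow>
           (let dt = T / real M in
             (i < k \<longrightarrow>
                \<bar>Dapprox \<alpha> dt u k i n - caputo \<alpha> u (real n * dt)\<bar>
                  \<le> C * ((real (n - k + i) * dt) powr (- \<alpha> - 1) * dt ^ (k + 1)
                         + dt powr (real k + 1 - \<alpha>))) \<and>
             (i = k \<longrightarrow>
                \<bar>Dapprox \<alpha> dt u k k n - caputo \<alpha> u (real n * dt)\<bar>
                  \<le> C * dt powr (real k + 1 - \<alpha>)))"
proof -
  from assms(4) obtain D where D0: "D 0 = u"
    and der: "\<forall>j<k+1. \<forall>x\<in>{0..T}. (D j has_real_derivative D (Suc j) x) (at x within {0..T})"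
    and cont: "\<forall>j\<le>k+1. continuous_on {0..T} (D j)"
    unfolding Ck_on_def by blast
  have "\<forall>j. \<exists>b. j \<le> k + 1 \<longrightarrow> (\<forall>x\<in>{0..T}. \<bar>D j x\<bar> \<le> b)"
  proof
    fix j
    show "\<exists>b. j \<le> k + 1 \<longrightarrow> (\<forall>x\<in>{0..T}. \<bar>D j x\<bar> \<le> b)"
    proof (cases "j \<le> k + 1")
      case True
      have "bounded (D j ` {0..T})"
        by (rule compact_imp_bounded, rule compact_continuous_image) (use cont True in auto)
      then obtain b where "\<forall>y\<in>D j ` {0..T}. norm y \<le> b" unfolding bounded_iff by blast
      then show ?thesis by auto
    qed simp
  qed
  then obtain bf where bf: "\<And>j x. j \<le> k + 1 \<Longrightarrow> x \<in> {0..T} \<Longrightarrow> \<bar>D j x\<bar> \<le> bf j" by metis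
  define Bnd where "Bnd = (\<Sum>j\<le>k+1. \<bar>bf j\<bar>)"
  have Bnd: "\<forall>j\<le>k+1. \<forall>x\<in>{0..T}. \<bar>D j x\<bar> \<le> Bnd"
  proof (intro allI impI ballI)
    fix j x assume j: "j \<le> k + 1" and x: "x \<in> {0..T}"
    have "\<bar>bf j\<bar> \<le> Bnd" unfolding Bnd_def by (rule member_le_sum) (use j in auto)
    then show "\<bar>D j x\<bar> \<le> Bnd" using bf[OF j x] by linarith
  qed
  have B0: "0 \<le> Bnd" unfolding Bnd_def by (simp add: sum_nonneg)
  define G where "G = Gamma (1 - \<alpha>)"
  have G: "0 < G" using assms(2) by (simp add: G_def)
  define a1 where "a1 = Bnd * real k ^ (k + 1) * \<alpha>"
  define a2 where "a2 = Bnd * real k ^ (k + 1)"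
  define a3 where "a3 = Bnd * real k ^ k / (1 - \<alpha>)"
  have a0: "0 \<le> a1" "0 \<le> a2" "0 \<le> a3" using B0 assms(1,2) by (auto simp: a1_def a2_def a3_def)
  define C where "C = (1 / G) * (a1 + a2 + a3)"
  show ?thesis
  proof (rule exI[of _ C], intro allI impI)
    fix M n :: nat assume M: "1 \<le> M" and kn: "k \<le> n" and nM: "n \<le> M"
    define dt where "dt = T / real M"
    have dt: "0 < dt" using M assms(3) by (simp add: dt_def)
    have nT: "real n * dt \<le> T"
    proof -
      have "real n * dt \<le> real M * dt" using nM dt by (intro mult_right_mono) auto
      also have "real M * dt = T" using M by (simp add: dt_def)
      finally show ?thesis .
    qed
    interpret est \<alpha> T dt Bnd u D k i n
      by unfold_locales (use assms(1,2,5,6) dt nT kn D0 der cont Bnd in auto)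
    define P where "P = (real (n - k + i) * dt) powr (- \<alpha> - 1) * dt ^ (k + 1)"
    define Q where "Q = dt powr (real k + 1 - \<alpha>)"
    have P0: "0 \<le> P" "0 \<le> Q" using dt by (auto simp: P_def Q_def)
    have q1: "dt ^ (k + 1) * dt powr (-\<alpha>) = Q"
    proof -
      have e: "real k + 1 - \<alpha> = real (k + 1) + (- \<alpha>)" by simp
      have "Q = dt powr (real (k + 1)) * dt powr (-\<alpha>)" unfolding Q_def e by (rule powr_add)
      then show ?thesis using powr_realpow[OF dt, of "k + 1"] by simp
    qed
    have q2: "dt ^ k * dt powr (1 - \<alpha>) = Q"
    proof -
      have e: "real k + 1 - \<alpha> = real k + (1 - \<alpha>)" by simp
      have "Q = dt powr (real k) * dt powr (1 - \<alpha>)" unfolding Q_def e by (rule powr_add)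
      then show ?thesis using powr_realpow[OF dt, of k] by simp
    qed
    have eA: "real k * (Bnd * (real k * dt) ^ k * ((\<alpha> * (real (n - k + i) * dt) powr (-\<alpha> - 1)) * dt)) = a1 * P"
      by (simp add: a1_def P_def power_mult_distrib algebra_simps)
    have eB: "Bnd * (real k * dt) ^ (k + 1) * dt powr (-\<alpha>) = a2 * Q"
      unfolding a2_def q1[symmetric] by (simp only: power_mult_distrib mult_ac)
    have eC: "Bnd * (real k * dt) ^ k * (dt powr (1 - \<alpha>) / (1 - \<alpha>)) = a3 * Q"
      unfolding a3_def q2[symmetric] by (simp add: power_mult_distrib)
    note tot = total[unfolded eA eB eC, folded G_def]
    have conj1: "\<bar>Dapprox \<alpha> dt u k i n - caputo \<alpha> u (real n * dt)\<bar> \<le> C * (P + Q)" if ik': "i < k"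
    proof -
      have "\<bar>Dapprox \<alpha> dt u k i n - caputo \<alpha> u (real n * dt)\<bar> \<le> (1 / G) * (a1 * P + a2 * Q + a3 * Q)"
        using tot ik' by simp
      also have "\<dots> \<le> (1 / G) * ((a1 + a2 + a3) * (P + Q))"
      proof (rule mult_left_mono)
        have "0 \<le> a1 * Q + a2 * P + a3 * P" using a0 P0 by simp
        moreover have "(a1 + a2 + a3) * (P + Q) = a1 * P + a2 * Q + a3 * Q + (a1 * Q + a2 * P + a3 * P)"
          by (simp add: algebra_simps)
        ultimately show "a1 * P + a2 * Q + a3 * Q \<le> (a1 + a2 + a3) * (P + Q)" by linarith
      qed (use G in simp)
      finally show ?thesis by (simp add: C_def)
    qed
    have conj2: "\<bar>Dapprox \<alpha> dt u k i n - caputo \<alpha> u (real n * dt)\<bar> \<le> C * Q" if ik': "i = k"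
    proof -
      have "\<bar>Dapprox \<alpha> dt u k i n - caputo \<alpha> u (real n * dt)\<bar> \<le> (1 / G) * (a2 * Q + a3 * Q)"
        using tot ik' by simp
      also have "\<dots> \<le> (1 / G) * ((a1 + a2 + a3) * Q)"
      proof (rule mult_left_mono)
        have "0 \<le> a1 * Q" using a0 P0 by simp
        then show "a2 * Q + a3 * Q \<le> (a1 + a2 + a3) * Q" by (simp add: algebra_simps)
      qed (use G in simp)
      finally show ?thesis by (simp add: C_def)
    qed
    show "let dt = T / real M in
             (i < k \<longrightarrow>
                \<bar>Dapprox \<alpha> dt u k i n - caputo \<alpha> u (real n * dt)\<bar>
                  \<le> C * ((real (n - k + i) * dt) powr (- \<alpha> - 1) * dt ^ (k + 1)
                         + dt powr (real k + 1 - \<alpha>))) \<and>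
             (i = k \<longrightarrow>
                \<bar>Dapprox \<alpha> dt u k k n - caputo \<alpha> u (real n * dt)\<bar>
                  \<le> C * dt powr (real k + 1 - \<alpha>))"
      unfolding Let_def dt_def[symmetric] using conj1 conj2 unfolding P_def Q_def by auto
  qed
qed

end
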